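(* Consider the DSA algorithm and its primal–dual variables $\mathbf{x}^t\in\mathbb{R}^{Np}$, $\mathbf{v}^t\in\mathbb{R}^{Np}$ as described in the context, and let $\mathbf{U}:=(\tilde{\mathbf{Z}}-\mathbf{Z})^{1/2}$ (positive semidefinite). Suppose the weight matrices $\mathbf{W},\tilde{\mathbf{W}}$ satisfy conditions (a)–(c) of the context. Then for every $t\ge 0$, $$\alpha\left[\hat{\mathbf{g}}^{t}-\nabla f(\mathbf{x}^* )\right]=(\mathbf{I}+\mathbf{Z}-2\tilde{\mathbf{Z}})(\mathbf{x}^*-\mathbf{x}^{t+1})+\tilde{\mathbf{Z}}(\mathbf{x}^{t}-\mathbf{x}^{t+1})-\mathbf{U}(\mathbf{v}^{t+1}-\mathbf{v}^* ).$$
   Context: Problem: a connected network of $N$ nodes; node $n$ holds $q_n$ differentiable functions $f_{n,i}:\mathbb{R}^p\to\mathbb{R}$, $i=1,\dots,q_n$, and $f_n:=\frac1{q_n}\sum_{i=1}^{q_n}f_{n,i}$. The goal is $\tilde{\mathbf{x}}^*:=\arg\min_{\mathbf{x}}\sum_{n=1}^N f_n(\mathbf{x})$ (assumed to exist). For $\mathbf{x}=[\mathbf{x}_1;\dots;\mathbf{x}_N]\in\mathbb{R}^{Np}$ set $f(\mathbf{x}):=\sum_n f_n(\mathbf{x}_n)$, so $\nabla f(\mathbf{x})=[\nabla f_1(\mathbf{x}_1);\dots;\nabla f_N(\mathbf{x}_N)]$, and $\mathbf{x}^*:=[\tilde{\mathbf{x}}^*;\dots;\tilde{\mathbf{x}}^*]$.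 Weights: symmetric matrices $\mathbf{W}=(w_{nm}),\tilde{\mathbf{W}}=(\tilde w_{nm})\in\mathbb{R}^{N\times N}$ whose entries are nonzero only if $m=n$ or $m$ is a neighbor of $n$, satisfying: (a) $\mathbf{W}=\mathbf{W}^T$, $\tilde{\mathbf{W}}=\tilde{\mathbf{W}}^T$; (b) $\mathrm{null}(\mathbf{I}-\tilde{\mathbf{W}})\supseteq\mathrm{span}(\mathbf{1})$, $\mathrm{null}(\mathbf{I}-\mathbf{W})=\mathrm{span}(\mathbf{1})$, $\mathrm{null}(\tilde{\mathbf{W}}-\mathbf{W})=\mathrm{span}(\mathbf{1})$; (c) $\mathbf{W}\preceq\tilde{\mathbf{W}}\preceq(\mathbf{I}+\mathbf{W})/2$ and $\tilde{\mathbf{W}}\succ 0$. Let $\mathbf{Z}:=\mathbf{W}\otimes\mathbf{I}_p$, $\tilde{\mathbf{Z}}:=\tilde{\mathbf{W}}\otimes\mathbf{I}_p$, $\mathbf{U}:=(\tilde{\mathbf{Z}}-\mathbf{Z})^{1/2}$. DSA: given stepsize $\alpha>0$ and initial $\mathbf{x}_n^0$, set $\mathbf{y}_{n,i}^0=\mathbf{x}_n^0$. At each $t\ge0$ each node $n$ draws $i_n^t$ uniformly from $\{1,\dots,q_n\}$, independently of the past, forms $\hat{\mathbf{g}}_n^t:=\nabla f_{n,i_n^t}(\mathbf{x}_n^t)-\nabla f_{n,i_n^t}(\mathbf{y}_{n,i_n^t}^t)+\frac1{q_n}\sum_{i=1}^{q_n}\nabla f_{n,i}(\mathbf{y}_{n,i}^t)$,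 and sets $\mathbf{y}_{n,i}^{t+1}=\mathbf{x}_n^t$ if $i=i_n^t$, $\mathbf{y}_{n,i}^{t+1}=\mathbf{y}_{n,i}^t$ otherwise. With $\hat{\mathbf{g}}^t:=[\hat{\mathbf{g}}_1^t;\dots;\hat{\mathbf{g}}_N^t]$: $\mathbf{x}^1=\mathbf{Z}\mathbf{x}^0-\alpha\hat{\mathbf{g}}^0$ and $\mathbf{x}^{t+1}=(\mathbf{I}+\mathbf{Z})\mathbf{x}^t-\tilde{\mathbf{Z}}\mathbf{x}^{t-1}-\alpha[\hat{\mathbf{g}}^t-\hat{\mathbf{g}}^{t-1}]$ for $t\ge1$. Dual variables: $\mathbf{v}^t:=\sum_{s=0}^t\mathbf{U}\mathbf{x}^s$; equivalently $\mathbf{v}^0=\mathbf{U}\mathbf{x}^0$, $\mathbf{x}^{t+1}=\mathbf{x}^t-\alpha\hat{\mathbf{g}}^t-(\mathbf{I}-\tilde{\mathbf{Z}})\mathbf{x}^t-\mathbf{U}\mathbf{v}^t$, $\mathbf{v}^{t+1}=\mathbf{v}^t+\mathbf{U}\mathbf{x}^{t+1}$. The optimal dual variable $\mathbf{v}^*$ is the vector in the column space of $\mathbf{U}$ with $\alpha\nabla f(\mathbf{x}^* )+\mathbf{U}\mathbf{v}^*=\mathbf{0}$. *)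

theory Defs
  imports "HOL-Analysis.Analysis"
begin

text \<open>Block vectors in R^(Np) are elements of real^'p^'n (node index 'n, local dimension 'p).
  Applying M \<otimes> I_p to a block vector x gives the block vector with n-th block
  sum over m of M n m times x_m.\<close>

definition kron_I :: "real^'n^'n \<Rightarrow> real^'p^'n \<Rightarrow> real^'p^'n" where
  "kron_I M x = (\<chi> n. \<Sum>m\<in>UNIV. (M$n$m) *\<^sub>R (x$m))"

definition psd_mat :: "real^'n^'n \<Rightarrow> bool" where
  "psd_mat M \<longleftrightarrow> (\<forall>x. 0 \<le> x \<bullet> (M *v x))"

definition pd_mat :: "real^'n^'n \<Rightarrow> bool" where
  "pd_mat M \<longleftrightarrow> (\<forall>x. x \<noteq> 0 \<longrightarrow> 0 < x \<bullet> (M *v x))"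

definition loewner_le :: "real^'n^'n \<Rightarrow> real^'n^'n \<Rightarrow> bool" where
  "loewner_le A B \<longleftrightarrow> psd_mat (B - A)"

definition is_psd_sqrt :: "real^'n^'n \<Rightarrow> real^'n^'n \<Rightarrow> bool" where
  "is_psd_sqrt S M \<longleftrightarrow> transpose S = S \<and> psd_mat S \<and> S ** S = M"

definition null_space :: "real^'n^'n \<Rightarrow> (real^'n) set" where
  "null_space M = {x. M *v x = 0}"

definition f_loc :: "('n \<Rightarrow> nat \<Rightarrow> real^'p \<Rightarrow> real) \<Rightarrow> ('n \<Rightarrow> nat) \<Rightarrow> 'n \<Rightarrow> real^'p \<Rightarrow> real" where
  "f_loc F q n y = (1 / real (q n)) * (\<Sum>i\<in>{1..q n}. F n i y)"

text \<open>Stacked gradient \<nabla>f(x) of f(x) = sum_n f_n(x_n), with G n i the gradient of f_(n,i);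
  \<nabla>f_n = (1/q_n) sum_i \<nabla>f_(n,i).\<close>
definition grad_f :: "('n \<Rightarrow> nat \<Rightarrow> real^'p \<Rightarrow> real^'p) \<Rightarrow> ('n \<Rightarrow> nat) \<Rightarrow> real^'p^'n \<Rightarrow> real^'p^'n" where
  "grad_f G q x = (\<chi> n. (1 / real (q n)) *\<^sub>R (\<Sum>i\<in>{1..q n}. G n i (x$n)))"

definition dsa_ghat :: "('n \<Rightarrow> nat \<Rightarrow> real^'p \<Rightarrow> real^'p) \<Rightarrow> ('n \<Rightarrow> nat) \<Rightarrow> (nat \<Rightarrow> 'n \<Rightarrow> nat)
     \<Rightarrow> nat \<Rightarrow> real^'p^'n \<Rightarrow> ('n \<Rightarrow> nat \<Rightarrow> real^'p) \<Rightarrow> real^'p^'n" where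
  "dsa_ghat G q idx t x y = (\<chi> n. G n (idx t n) (x$n) - G n (idx t n) (y n (idx t n))
        + (1 / real (q n)) *\<^sub>R (\<Sum>i\<in>{1..q n}. G n i (y n i)))"

definition dsa_yupd :: "(nat \<Rightarrow> 'n \<Rightarrow> nat) \<Rightarrow> nat \<Rightarrow> real^'p^'n \<Rightarrow> ('n \<Rightarrow> nat \<Rightarrow> real^'p)
     \<Rightarrow> ('n \<Rightarrow> nat \<Rightarrow> real^'p)" where
  "dsa_yupd idx t x y = (\<lambda>n i. if i = idx t n then x$n else y n i)"

text \<open>dsa_state ... t = (x^t, y^t, x^(t+1), y^(t+1)).\<close>
fun dsa_state :: "real^'n^'n \<Rightarrow> real^'n^'n \<Rightarrow> ('n \<Rightarrow> nat \<Rightarrow> real^'p \<Rightarrow> real^'p) \<Rightarrow> ('n \<Rightarrow> nat)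
     \<Rightarrow> (nat \<Rightarrow> 'n \<Rightarrow> nat) \<Rightarrow> real \<Rightarrow> real^'p^'n \<Rightarrow> nat
     \<Rightarrow> (real^'p^'n) \<times> ('n \<Rightarrow> nat \<Rightarrow> real^'p) \<times> (real^'p^'n) \<times> ('n \<Rightarrow> nat \<Rightarrow> real^'p)" where
  "dsa_state W Wt G q idx \<alpha> x0 0 =
     (let y0 = (\<lambda>n i. x0$n);
          g0 = dsa_ghat G q idx 0 x0 y0;
          x1 = kron_I W x0 - \<alpha> *\<^sub>R g0;
          y1 = dsa_yupd idx 0 x0 y0
      in (x0, y0, x1, y1))"
| "dsa_state W Wt G q idx \<alpha> x0 (Suc t) =
     (let (xp, yp, xc, yc) = dsa_state W Wt G q idx \<alpha> x0 t;
          gp = dsa_ghat G q idx t xp yp;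
          gc = dsa_ghat G q idx (Suc t) xc yc;
          xn = xc + kron_I W xc - kron_I Wt xp - \<alpha> *\<^sub>R (gc - gp);
          yn = dsa_yupd idx (Suc t) xc yc
      in (xc, yc, xn, yn))"

definition dsa_x where
  "dsa_x W Wt G q idx \<alpha> x0 t = fst (dsa_state W Wt G q idx \<alpha> x0 t)"

definition dsa_y where
  "dsa_y W Wt G q idx \<alpha> x0 t = fst (snd (dsa_state W Wt G q idx \<alpha> x0 t))"

definition dsa_g where
  "dsa_g W Wt G q idx \<alpha> x0 t =
     dsa_ghat G q idx t (dsa_x W Wt G q idx \<alpha> x0 t) (dsa_y W Wt G q idx \<alpha> x0 t)"

definition dsa_v where
  "dsa_v W Wt Uw G q idx \<alpha> x0 t = (\<Sum>s\<in>{0..t}. kron_I Uw (dsa_x W Wt G q idx \<alpha> x0 s))"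

end

theory Submission
  imports Defs
begin

lemma kron_add_M: "kron_I (A + B) x = kron_I A x + kron_I B x"
  by (simp add: kron_I_def vec_eq_iff scaleR_add_left sum.distrib)
lemma kron_diff_M: "kron_I (A - B) x = kron_I A x - kron_I B x"
  by (simp add: kron_I_def vec_eq_iff scaleR_diff_left sum_subtractf)
lemma kron_scale_M: "kron_I (c *\<^sub>R A) x = c *\<^sub>R kron_I A x"
  by (simp add: kron_I_def vec_eq_iff scaleR_sum_right mult_ac)
lemma kron_add: "kron_I A (x + y) = kron_I A x + kron_I A y"
  by (simp add: kron_I_def vec_eq_iff scaleR_add_right sum.distrib)
lemma kron_diff: "kron_I A (x - y) = kron_I A x - kron_I A y"
  by (simp add: kron_I_def vec_eq_iff scaleR_diff_right sum_subtractf)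
lemma kron_scale: "kron_I A (c *\<^sub>R x) = c *\<^sub>R kron_I A x"
  by (simp add: kron_I_def vec_eq_iff scaleR_sum_right mult_ac)
lemma kron_one: "kron_I (mat 1) x = x"
proof -
  have "\<And>n. (\<Sum>m\<in>UNIV. (mat 1 $ n $ m :: real) *\<^sub>R x $ m) = x $ n"
  proof -
    fix n
    have "\<And>m. (mat 1 $ n $ m :: real) *\<^sub>R x $ m = (if n = m then x $ m else 0)"
      by (simp add: mat_def)
    then show "(\<Sum>m\<in>UNIV. (mat 1 $ n $ m :: real) *\<^sub>R x $ m) = x $ n" by simp
  qed
  then show ?thesis by (simp add: kron_I_def vec_eq_iff)
qed
lemma kron_comp: "kron_I A (kron_I B x) = kron_I (A ** B) x"
proof -
  have "\<And>n. (\<Sum>m\<in>UNIV. A$n$m *\<^sub>R (\<Sum>k\<in>UNIV. B$m$k *\<^sub>R x$k))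
      = (\<Sum>k\<in>UNIV. (\<Sum>m\<in>UNIV. A$n$m * B$m$k) *\<^sub>R x$k)"
  proof -
    fix n
    have "(\<Sum>m\<in>UNIV. A$n$m *\<^sub>R (\<Sum>k\<in>UNIV. B$m$k *\<^sub>R x$k))
       = (\<Sum>m\<in>UNIV. \<Sum>k\<in>UNIV. (A$n$m * B$m$k) *\<^sub>R x$k)"
      by (simp add: scaleR_sum_right)
    also have "\<dots> = (\<Sum>k\<in>UNIV. \<Sum>m\<in>UNIV. (A$n$m * B$m$k) *\<^sub>R x$k)"
      by (rule sum.swap)
    also have "\<dots> = (\<Sum>k\<in>UNIV. (\<Sum>m\<in>UNIV. A$n$m * B$m$k) *\<^sub>R x$k)"
      by (simp add: scaleR_sum_left)
    finally show "(\<Sum>m\<in>UNIV. A$n$m *\<^sub>R (\<Sum>k\<in>UNIV. B$m$k *\<^sub>R x$k))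
      = (\<Sum>k\<in>UNIV. (\<Sum>m\<in>UNIV. A$n$m * B$m$k) *\<^sub>R x$k)" .
  qed
  then show ?thesis by (simp add: kron_I_def vec_eq_iff matrix_matrix_mult_def)
qed

lemma kron_const:
  assumes "M *v vec 1 = 0"
  shows "kron_I M (\<chi> n. xs) = 0"
proof -
  have "\<And>n. (\<Sum>m\<in>UNIV. M$n$m) = 0"
    using assms by (simp add: vec_eq_iff matrix_vector_mult_def)
  then show ?thesis by (simp add: kron_I_def vec_eq_iff scaleR_sum_left[symmetric])
qed

lemma kron_lin: "kron_I (a *\<^sub>R A - B) c = a *\<^sub>R kron_I A c - kron_I B c"
  by (simp only: kron_diff_M kron_scale_M)

lemma abs_lem:
  fixes ag :: "'a::real_vector"
  assumes "ag = wtx0 - x1 - uv" "ags = - us" "mc = 0" "mx1 = x1 + wx1 - 2 *\<^sub>R wtx1"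
    "uv1 = uv + wtx1 - wx1"
  shows "ag - ags = (mc - mx1) + (wtx0 - wtx1) - (uv1 - us)"
  unfolding assms by (simp add: algebra_simps scaleR_2)

lemma grp: "(a::'a::ab_group_add) = b - c \<Longrightarrow> c = b - a"
  by simp

theorem lemma2:
  fixes E :: "'n::finite \<Rightarrow> 'n \<Rightarrow> bool"
    and W Wt Uw :: "real^'n^'n"
    and F :: "'n \<Rightarrow> nat \<Rightarrow> real^'p::finite \<Rightarrow> real"
    and G :: "'n \<Rightarrow> nat \<Rightarrow> real^'p \<Rightarrow> real^'p"
    and q :: "'n \<Rightarrow> nat"
    and idx :: "nat \<Rightarrow> 'n \<Rightarrow> nat"
    and \<alpha> :: real and x0 :: "real^'p^'n"
    and xs :: "real^'p" and vstar :: "real^'p^'n"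
  assumes E_sym: "\<And>n m. E n m \<Longrightarrow> E m n"
    and E_conn: "\<And>a b. (a, b) \<in> {(n, m). E n m}\<^sup>*"
    and W_supp: "\<And>n m. W$n$m \<noteq> 0 \<Longrightarrow> m = n \<or> E n m"
    and Wt_supp: "\<And>n m. Wt$n$m \<noteq> 0 \<Longrightarrow> m = n \<or> E n m"
    and q_pos: "\<And>n. q n \<ge> 1"
    and grad: "\<And>n i y. i \<in> {1..q n} \<Longrightarrow> GDERIV (F n i) y :> G n i y"
    and xs_opt: "\<And>y. (\<Sum>n\<in>UNIV. f_loc F q n xs) \<le> (\<Sum>n\<in>UNIV. f_loc F q n y)"
    and a_W: "transpose W = W" and a_Wt: "transpose Wt = Wt"
    and b1: "span {vec 1} \<subseteq> null_space (mat 1 - Wt)"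
    and b2: "null_space (mat 1 - W) = span {vec 1}"
    and b3: "null_space (Wt - W) = span {vec 1}"
    and c1: "loewner_le W Wt"
    and c2: "loewner_le Wt ((1/2) *\<^sub>R (mat 1 + W))"
    and c3: "pd_mat Wt"
    and U_def: "is_psd_sqrt Uw (Wt - W)"
    and alpha_pos: "\<alpha> > 0"
    and idx_range: "\<And>t n. idx t n \<in> {1..q n}"
    and vstar_range: "vstar \<in> range (kron_I Uw)"
    and vstar_opt: "\<alpha> *\<^sub>R grad_f G q (\<chi> n. xs) + kron_I Uw vstar = 0"
  shows "\<alpha> *\<^sub>R (dsa_g W Wt G q idx \<alpha> x0 t - grad_f G q (\<chi> n. xs))
     = kron_I (mat 1 + W - 2 *\<^sub>R Wt) ((\<chi> n. xs) - dsa_x W Wt G q idx \<alpha> x0 (t+1))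
       + kron_I Wt (dsa_x W Wt G q idx \<alpha> x0 t - dsa_x W Wt G q idx \<alpha> x0 (t+1))
       - kron_I Uw (dsa_v W Wt Uw G q idx \<alpha> x0 (t+1) - vstar)"
proof -
  define S where "S = dsa_state W Wt G q idx \<alpha> x0"
  define x where "x = dsa_x W Wt G q idx \<alpha> x0"
  define g where "g = dsa_g W Wt G q idx \<alpha> x0"
  define v where "v = dsa_v W Wt Uw G q idx \<alpha> x0"
  have UU: "Uw ** Uw = Wt - W" using U_def by (simp add: is_psd_sqrt_def)
  have S_suc: "fst (S (Suc k)) = fst (snd (snd (S k)))
      \<and> fst (snd (S (Suc k))) = snd (snd (snd (S k)))
      \<and> fst (snd (snd (S (Suc k)))) = fst (snd (snd (S k))) + kron_I W (fst (snd (snd (S k))))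
          - kron_I Wt (fst (S k)) - \<alpha> *\<^sub>R (dsa_ghat G q idx (Suc k) (fst (snd (snd (S k)))) (snd (snd (snd (S k))))
              - dsa_ghat G q idx k (fst (S k)) (fst (snd (S k))))" for k
  proof -
    obtain a b c d where "S k = (a, b, c, d)" by (cases "S k") auto
    then show ?thesis unfolding S_def by (simp add: Let_def)
  qed
  have x1: "x (Suc k) = fst (snd (snd (S k)))" for k
    using S_suc unfolding x_def dsa_x_def S_def by simp
  have y1: "dsa_y W Wt G q idx \<alpha> x0 (Suc k) = snd (snd (snd (S k)))" for k
    using S_suc unfolding dsa_y_def S_def by simp
  have x0': "x 0 = x0" by (simp add: x_def dsa_x_def Let_def)
  have rec0: "x (Suc 0) = kron_I W (x 0) - \<alpha> *\<^sub>R g 0"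
    using x1[of 0] by (simp add: S_def x_def g_def dsa_g_def dsa_x_def dsa_y_def Let_def)
  have recS: "x (Suc (Suc k)) = x (Suc k) + kron_I W (x (Suc k)) - kron_I Wt (x k)
      - \<alpha> *\<^sub>R (g (Suc k) - g k)" for k
    using S_suc[of k] x1[of "Suc k"] x1[of k] y1[of k]
    by (simp add: x_def g_def dsa_g_def dsa_x_def dsa_y_def S_def)
  have vS: "v (Suc k) = v k + kron_I Uw (x (Suc k))" for k
    by (simp add: v_def dsa_v_def x_def)
  have v0: "v 0 = kron_I Uw (x 0)" by (simp add: v_def dsa_v_def x_def)
  have UUx: "kron_I Uw (kron_I Uw y) = kron_I Wt y - kron_I W y" for y
    by (simp add: kron_comp UU kron_diff_M)
  have D: "\<alpha> *\<^sub>R g k = kron_I Wt (x k) - x (Suc k) - kron_I Uw (v k)" for k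
  proof (induction k)
    case 0
    show ?case using rec0 by (simp add: v0 UUx)
  next
    case (Suc k)
    have p: "kron_I Uw (v (Suc k)) = kron_I Uw (v k) + kron_I Wt (x (Suc k)) - kron_I W (x (Suc k))"
      by (simp add: vS kron_add UUx)
    have h: "\<alpha> *\<^sub>R (g (Suc k) - g k) = x (Suc k) + kron_I W (x (Suc k)) - kron_I Wt (x k) - x (Suc (Suc k))"
      using grp[OF recS[of k]] by simp
    have "\<alpha> *\<^sub>R g (Suc k) = \<alpha> *\<^sub>R g k + \<alpha> *\<^sub>R (g (Suc k) - g k)"
      by (simp add: scaleR_diff_right)
    also have "\<dots> = (kron_I Wt (x k) - x (Suc k) - kron_I Uw (v k))
       + (x (Suc k) + kron_I W (x (Suc k)) - kron_I Wt (x k) - x (Suc (Suc k)))"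
      using Suc h by simp
    also have "\<dots> = kron_I W (x (Suc k)) - kron_I Uw (v k) - x (Suc (Suc k))"
      by (simp add: algebra_simps)
    also have "\<dots> = kron_I Wt (x (Suc k)) - x (Suc (Suc k)) - kron_I Uw (v (Suc k))"
      using p by (simp add: algebra_simps)
    finally show ?case .
  qed
  have one1: "(mat 1 - W) *v vec 1 = 0" using b2 span_base[of "vec 1" "{vec 1}"]
    by (auto simp: null_space_def)
  have one2: "(mat 1 - Wt) *v vec 1 = 0" using b1 span_base[of "vec 1" "{vec 1}"]
    by (auto simp: null_space_def)
  have Meq: "(mat 1 + W - 2 *\<^sub>R Wt) = 2 *\<^sub>R (mat 1 - Wt) - (mat 1 - W)"
    by (simp add: algebra_simps scaleR_2)
  have cons: "kron_I (mat 1 + W - 2 *\<^sub>R Wt) (\<chi> n. xs) = 0"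
    unfolding Meq kron_lin kron_const[OF one1] kron_const[OF one2] by simp
  have gs: "\<alpha> *\<^sub>R grad_f G q (\<chi> n. xs) = - kron_I Uw vstar"
    using vstar_opt by (simp add: eq_neg_iff_add_eq_0)
  have vt: "kron_I Uw (v (Suc t)) = kron_I Uw (v t) + kron_I Wt (x (Suc t)) - kron_I W (x (Suc t))"
    by (simp add: vS kron_add UUx)
  have "kron_I (mat 1 + W - 2 *\<^sub>R Wt) (x (Suc t)) = x (Suc t) + kron_I W (x (Suc t)) - 2 *\<^sub>R kron_I Wt (x (Suc t))"
    by (simp add: kron_add_M kron_diff_M kron_scale_M kron_one)
  then have that: "kron_I (mat 1 + W - 2 *\<^sub>R Wt) (x (t+1)) = x (t+1) + kron_I W (x (t+1)) - 2 *\<^sub>R kron_I Wt (x (t+1))" by simp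
  show ?thesis
    unfolding x_def[symmetric] g_def[symmetric] v_def[symmetric]
      kron_diff scaleR_diff_right
    by (rule abs_lem[OF D[of t, unfolded Suc_eq_plus1] gs cons
          _ vt[unfolded Suc_eq_plus1]]) (use that in \<open>simp only: Suc_eq_plus1\<close>)
qed

end
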